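(* Let $G$ be a locally finite graph with graph metric $d$, $h$ an even positive integer and $R$ a positive integer. Let $S_1\subseteq V(G)$ be such that distinct elements of $S_1$ are at $d$-distance greater than $h$ and every vertex is at $d$-distance at most $h$ from $S_1$; let $\ell_1:S_1\to[0,1/2]$ be injective, let $\mathcal V_1(v)$ be the unique $s\in S_1$ minimizing $d(v,s)+\ell_1(s)$, and $V_{1,s}=\{v:\mathcal V_1(v)=s\}$. Let $\Gamma$ be the graph on vertex set $S_1$ in which distinct $s,s'$ are adjacent iff some edge of $G$ joins $V_{1,s}$ and $V_{1,s'}$, with graph metric $d_\Gamma$. Let $S_2\subseteq S_1$ be such that distinct elements of $S_2$ are at $d_\Gamma$-distance greater than $R$ and every element of $S_1$ is at $d_\Gamma$-distance at most $R$ from $S_2$; let $\ell_2:S_2\to[0,1/2]$ be injective, and for $s'\in S_1$ let $\mathcal V_2(s')$ be the unique $s\in S_2$ minimizing $d_\Gamma(s',s)+\ell_2(s)$. For $s\in S_2$ set $V_{2,s}=\{v\in V(G):\mathcal V_2(\mathcal V_1(v))=s\}$. Then for every $s\in S_2$, the induced subgraph $G[V_{2,s}]$ is connected and contains every vertex at $d$-distance at most $\lfloor R/2\rfloor-h$ from $s$. *)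

theory Defs
  imports Complex_Main "HOL-Library.Extended_Real"
begin

text \<open>Graphs are given by a vertex set W and an edge relation E (restricted to W when used).\<close>

definition walk :: "'a set \<Rightarrow> ('a \<Rightarrow> 'a \<Rightarrow> bool) \<Rightarrow> 'a list \<Rightarrow> bool" where
  "walk W E xs \<longleftrightarrow> xs \<noteq> [] \<and> set xs \<subseteq> W \<and>
     (\<forall>i. Suc i < length xs \<longrightarrow> E (xs ! i) (xs ! Suc i))"

text \<open>Graph metric (infinite if no connecting walk).\<close>
definition gdist :: "'a set \<Rightarrow> ('a \<Rightarrow> 'a \<Rightarrow> bool) \<Rightarrow> 'a \<Rightarrow> 'a \<Rightarrow> enat" where
  "gdist W E u v = (INF xs \<in> {xs. walk W E xs \<and> hd xs = u \<and> last xs = v}. enat (length xs - 1))"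

definition simple_graph :: "'a set \<Rightarrow> ('a \<Rightarrow> 'a \<Rightarrow> bool) \<Rightarrow> bool" where
  "simple_graph W E \<longleftrightarrow> (\<forall>u v. E u v \<longrightarrow> u \<in> W \<and> v \<in> W \<and> u \<noteq> v \<and> E v u)"

definition locally_finite :: "'a set \<Rightarrow> ('a \<Rightarrow> 'a \<Rightarrow> bool) \<Rightarrow> bool" where
  "locally_finite W E \<longleftrightarrow> (\<forall>v\<in>W. finite {u. E v u})"

definition induced_connected :: "('a \<Rightarrow> 'a \<Rightarrow> bool) \<Rightarrow> 'a set \<Rightarrow> bool" where
  "induced_connected E U \<longleftrightarrow> U \<noteq> {} \<and>
     (\<forall>u\<in>U. \<forall>v\<in>U. \<exists>xs. walk U E xs \<and> hd xs = u \<and> last xs = v)"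

definition vcenter :: "'a set \<Rightarrow> ('a \<Rightarrow> 'a \<Rightarrow> bool) \<Rightarrow> 'a set \<Rightarrow> ('a \<Rightarrow> real) \<Rightarrow> 'a \<Rightarrow> 'a" where
  "vcenter W E S l v = (THE s. s \<in> S \<and>
     (\<forall>t\<in>S. ereal_of_enat (gdist W E v s) + ereal (l s) \<le> ereal_of_enat (gdist W E v t) + ereal (l t)))"

definition cell_graph :: "'a set \<Rightarrow> ('a \<Rightarrow> 'a \<Rightarrow> bool) \<Rightarrow> ('a \<Rightarrow> 'a) \<Rightarrow> 'a set \<Rightarrow> 'a \<Rightarrow> 'a \<Rightarrow> bool" where
  "cell_graph W E f S s s' \<longleftrightarrow> s \<in> S \<and> s' \<in> S \<and> s \<noteq> s' \<and>
     (\<exists>u v. u \<in> W \<and> v \<in> W \<and> E u v \<and> f u = s \<and> f v = s')"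

end

theory Submission
  imports Defs
begin


lemma walk_Cons: "walk W E (x # xs) \<longleftrightarrow> x \<in> W \<and> (xs = [] \<or> (walk W E xs \<and> E x (hd xs)))"
proof (cases xs)
  case Nil then show ?thesis by (simp add: walk_def)
next
  case (Cons y ys)
  show ?thesis
  proof
    assume a: "walk W E (x # xs)"
    have "E x y" using a Cons unfolding walk_def by (metis Suc_less_eq length_Cons nth_Cons_0 nth_Cons_Suc zero_less_Suc)
    moreover have "walk W E xs" unfolding walk_def
    proof (intro conjI allI impI)
      show "xs \<noteq> []" using Cons by simp
      show "set xs \<subseteq> W" using a unfolding walk_def by auto
      fix i assume "Suc i < length xs"
      then show "E (xs!i) (xs!Suc i)" using a unfolding walk_def by (metis Suc_less_eq length_Cons nth_Cons_Suc)
    qed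
    ultimately show "x \<in> W \<and> (xs = [] \<or> (walk W E xs \<and> E x (hd xs)))" using a Cons by (auto simp: walk_def)
  next
    assume a: "x \<in> W \<and> (xs = [] \<or> (walk W E xs \<and> E x (hd xs)))"
    then have w: "walk W E xs" "E x y" using Cons by auto
    show "walk W E (x # xs)" unfolding walk_def
    proof (intro conjI allI impI)
      show "set (x # xs) \<subseteq> W" using a w walk_def by auto
    next
      fix i assume "Suc i < length (x # xs)"
      then show "E ((x # xs) ! i) ((x # xs) ! Suc i)"
      proof (cases i)
        case 0 then show ?thesis using w Cons by simp
      next
        case (Suc j)
        then show ?thesis using w \<open>Suc i < length (x # xs)\<close> unfolding walk_def by simp
      qed
    qed simp
  qed
qed

lemma walk_single[simp]: "walk W E [x] \<longleftrightarrow> x \<in> W" by (simp add: walk_Cons)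

lemma walk_append: "walk W E xs \<Longrightarrow> walk W E ys \<Longrightarrow> E (last xs) (hd ys) \<Longrightarrow> walk W E (xs @ ys)"
proof (induction xs)
  case Nil then show ?case by (simp add: walk_def)
next
  case (Cons x xs)
  show ?case
  proof (cases "xs = []")
    case True then show ?thesis using Cons.prems by (simp add: walk_Cons)
  next
    case False
    then show ?thesis using Cons by (auto simp: walk_Cons)
  qed
qed

lemma walk_rev: assumes sym: "\<And>x y. E x y \<Longrightarrow> E y x" shows "walk W E xs \<Longrightarrow> walk W E (rev xs)"
proof (induction xs)
  case Nil then show ?case by (simp add: walk_def)
next
  case (Cons x xs)
  show ?case
  proof (cases "xs = []")
    case True then show ?thesis using Cons.prems by (auto simp: walk_Cons)
  next
    case False
    then have "walk W E (rev xs)" "E x (hd xs)" "x \<in> W" using Cons by (auto simp: walk_Cons)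
    then show ?thesis using False sym by (auto intro!: walk_append simp: last_rev)
  qed
qed

lemma walk_mono: "walk U E xs \<Longrightarrow> U \<subseteq> U' \<Longrightarrow> walk U' E xs"
  by (auto simp: walk_def)

lemma walk_take: "walk W E xs \<Longrightarrow> 0 < n \<Longrightarrow> walk W E (take n xs)"
  unfolding walk_def by (auto dest: in_set_takeD)

lemma walk_drop: "walk W E xs \<Longrightarrow> n < length xs \<Longrightarrow> walk W E (drop n xs)"
  unfolding walk_def by (auto dest: in_set_dropD)

definition reach :: "'a set \<Rightarrow> ('a \<Rightarrow> 'a \<Rightarrow> bool) \<Rightarrow> 'a \<Rightarrow> 'a \<Rightarrow> bool" where
  "reach W E u v \<longleftrightarrow> (\<exists>xs. walk W E xs \<and> hd xs = u \<and> last xs = v)"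

lemma reach_refl: "x \<in> W \<Longrightarrow> reach W E x x"
  unfolding reach_def by (intro exI[of _ "[x]"]) simp

lemma reach_edge: "x \<in> W \<Longrightarrow> y \<in> W \<Longrightarrow> E x y \<Longrightarrow> reach W E x y"
  unfolding reach_def by (intro exI[of _ "[x,y]"]) (simp add: walk_Cons)

lemma walk_glue: "walk W E xs \<Longrightarrow> walk W E ys \<Longrightarrow> last xs = hd ys \<Longrightarrow>
   walk W E (xs @ tl ys) \<and> hd (xs @ tl ys) = hd xs \<and> last (xs @ tl ys) = last ys \<and>
   length (xs @ tl ys) = length xs + length ys - 1"
proof -
  assume a: "walk W E xs" "walk W E ys" "last xs = hd ys"
  then have ne: "xs \<noteq> []" "ys \<noteq> []" by (auto simp: walk_def)
  show ?thesis
  proof (cases "tl ys = []")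
    case True
    then obtain y where "ys = [y]" using ne by (cases ys) auto
    then show ?thesis using a ne True by auto
  next
    case False
    have "walk W E (tl ys)" "E (hd ys) (hd (tl ys))" using a(2) ne False
      by (cases ys; auto simp: walk_Cons)+
    moreover have "length (xs @ tl ys) = length xs + length ys - 1" using ne by (cases ys) auto
    ultimately show ?thesis using a ne False by (auto intro!: walk_append simp: last_tl)
  qed
qed

lemma reach_trans: "reach W E x y \<Longrightarrow> reach W E y z \<Longrightarrow> reach W E x z"
  unfolding reach_def using walk_glue by metis

lemma reach_sym: "(\<And>x y. E x y \<Longrightarrow> E y x) \<Longrightarrow> reach W E x y \<Longrightarrow> reach W E y x"
  unfolding reach_def
  by (metis walk_rev hd_rev last_rev)

lemma reach_mono: "reach U E x y \<Longrightarrow> U \<subseteq> U' \<Longrightarrow> reach U' E x y"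
  unfolding reach_def using walk_mono by metis

lemma last_take_nth: "n < length xs \<Longrightarrow> last (take (Suc n) xs) = xs ! n"
  by (metis Suc_leI last_snoc take_Suc_conv_app_nth)

lemma gdist_le: "walk W E xs \<Longrightarrow> hd xs = u \<Longrightarrow> last xs = v \<Longrightarrow> gdist W E u v \<le> enat (length xs - 1)"
  unfolding gdist_def by (rule INF_lower) auto

lemma gdist_enat: assumes "gdist W E u v = enat k"
  shows "\<exists>xs. walk W E xs \<and> hd xs = u \<and> last xs = v \<and> length xs = Suc k"
proof -
  let ?A = "(\<lambda>xs. enat (length xs - 1)) ` {xs. walk W E xs \<and> hd xs = u \<and> last xs = v}"
  have "?A \<noteq> {}"
  proof
    assume "?A = {}"
    then have e: "{xs. walk W E xs \<and> hd xs = u \<and> last xs = v} = {}" by blast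
    have "gdist W E u v = \<infinity>" unfolding gdist_def e by (simp add: top_enat_def)
    then show False using assms by simp
  qed
  then have "Inf ?A \<in> ?A" unfolding Inf_enat_def by (metis (no_types, lifting) LeastI_ex ex_in_conv)
  then obtain xs where xs: "walk W E xs" "hd xs = u" "last xs = v" "enat (length xs - 1) = enat k"
    using assms unfolding gdist_def by auto
  then have "xs \<noteq> []" by (auto simp: walk_def)
  then show ?thesis using xs by (intro exI[of _ xs]) auto
qed

lemma gdist_refl: "u \<in> W \<Longrightarrow> gdist W E u u = 0"
  using gdist_le[of W E "[u]" u u] by (simp add: zero_enat_def[symmetric])

lemma gdist_edge: "u \<in> W \<Longrightarrow> v \<in> W \<Longrightarrow> E u v \<Longrightarrow> gdist W E u v \<le> 1"
  using gdist_le[of W E "[u,v]" u v] by (simp add: walk_Cons one_enat_def)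

lemma gdist_trans: "gdist W E u w \<le> gdist W E u v + gdist W E v w"
proof (cases "gdist W E u v"; cases "gdist W E v w")
  fix a b assume a: "gdist W E u v = enat a" "gdist W E v w = enat b"
  obtain xs where xs: "walk W E xs" "hd xs = u" "last xs = v" "length xs = Suc a" using gdist_enat[OF a(1)] by blast
  obtain ys where ys: "walk W E ys" "hd ys = v" "last ys = w" "length ys = Suc b" using gdist_enat[OF a(2)] by blast
  have "gdist W E u w \<le> enat (length (xs @ tl ys) - 1)"
    using walk_glue[OF xs(1) ys(1)] xs ys by (intro gdist_le) auto
  also have "\<dots> = enat a + enat b" using xs ys by simp
  finally show ?thesis using a by simp
qed auto

lemma gdist_sym: assumes "\<And>x y. E x y \<Longrightarrow> E y x" shows "gdist W E u v = gdist W E v u"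
proof -
  have *: "gdist W E a b \<le> gdist W E b a" for a b
  proof (cases "gdist W E b a")
    case (enat k)
    then obtain xs where "walk W E xs" "hd xs = b" "last xs = a" "length xs = Suc k" using gdist_enat[OF enat] by blast
    note xs = this
    have "walk W E (rev xs)" using walk_rev[of E W xs] assms xs(1) by blast
    then show ?thesis using gdist_le[of W E "rev xs" a b] xs enat by (simp add: hd_rev last_rev)
  qed simp
  show ?thesis using *[of u v] *[of v u] by simp
qed

lemma ball_finite: assumes lf: "\<forall>w\<in>W. finite {u. E w u}"
  shows "finite {u. gdist W E v u \<le> enat n}"
proof (induction n)
  case 0
  have "{u. gdist W E v u \<le> enat 0} \<subseteq> {v}"
  proof
    fix u assume "u \<in> {u. gdist W E v u \<le> enat 0}"
    then have "gdist W E v u = enat 0" by (simp add: zero_enat_def[symmetric])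
    then obtain xs where "walk W E xs" "hd xs = v" "last xs = u" "length xs = 1" using gdist_enat by fastforce
    then show "u \<in> {v}" by (cases xs) auto
  qed
  then show ?case using finite_subset by blast
next
  case (Suc n)
  let ?B = "{u. gdist W E v u \<le> enat n}"
  have "{u. gdist W E v u \<le> enat (Suc n)} \<subseteq> ?B \<union> (\<Union>w\<in>?B \<inter> W. {u. E w u})"
  proof
    fix u assume "u \<in> {u. gdist W E v u \<le> enat (Suc n)}"
    then obtain k where k: "gdist W E v u = enat k" "k \<le> Suc n" by (cases "gdist W E v u") auto
    show "u \<in> ?B \<union> (\<Union>w\<in>?B \<inter> W. {u. E w u})"
    proof (cases "k \<le> n")
      case True then show ?thesis using k by auto
    next
      case False
      then have kk: "k = Suc n" using k by simp
      obtain xs where xs: "walk W E xs" "hd xs = v" "last xs = u" "length xs = Suc k" using gdist_enat[OF k(1)] by blast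
      define w where "w = xs ! n"
      have "walk W E (take (Suc n) xs)" using walk_take[OF xs(1)] by simp
      then have "gdist W E v w \<le> enat (length (take (Suc n) xs) - 1)"
        using xs kk by (intro gdist_le) (auto simp: w_def hd_take last_take_nth hd_conv_nth)
      then have "w \<in> ?B" using xs kk by simp
      moreover have "w \<in> W" using xs kk unfolding w_def walk_def by auto
      moreover have "E w u" using xs kk unfolding w_def walk_def by (auto simp: last_conv_nth)
      ultimately show ?thesis by blast
    qed
  qed
  moreover have "finite (?B \<union> (\<Union>w\<in>?B \<inter> W. {u. E w u}))" using Suc lf by auto
  ultimately show ?case using finite_subset by blast
qed

definition isvc :: "'a set \<Rightarrow> ('a \<Rightarrow> 'a \<Rightarrow> bool) \<Rightarrow> 'a set \<Rightarrow> ('a \<Rightarrow> real) \<Rightarrow> 'a \<Rightarrow> 'a \<Rightarrow> nat \<Rightarrow> bool" where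
  "isvc W E S l v s c \<longleftrightarrow> s \<in> S \<and> gdist W E v s = enat c \<and>
     (\<forall>t\<in>S. gdist W E v t = \<infinity> \<or> (\<exists>b. gdist W E v t = enat b \<and> real c + l s \<le> real b + l t))"

lemma VC_eq:
  assumes inj: "inj_on l S" and bd: "\<forall>s\<in>S. 0 \<le> l s \<and> l s \<le> 1/2"
    and iv: "isvc W E S l v s c"
  shows "vcenter W E S l v = s"
  unfolding vcenter_def
proof (rule the_equality)
  have s: "s \<in> S" "gdist W E v s = enat c" using iv by (auto simp: isvc_def)
  show "s \<in> S \<and> (\<forall>t\<in>S. ereal_of_enat (gdist W E v s) + ereal (l s) \<le> ereal_of_enat (gdist W E v t) + ereal (l t))"
  proof (intro conjI ballI)
    fix t assume t: "t \<in> S"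
    then consider "gdist W E v t = \<infinity>" | b where "gdist W E v t = enat b" "real c + l s \<le> real b + l t"
      using iv by (auto simp: isvc_def)
    then show "ereal_of_enat (gdist W E v s) + ereal (l s) \<le> ereal_of_enat (gdist W E v t) + ereal (l t)"
      by cases (auto simp: s)
  qed (rule s)
next
  fix s' assume a: "s' \<in> S \<and> (\<forall>t\<in>S. ereal_of_enat (gdist W E v s') + ereal (l s') \<le> ereal_of_enat (gdist W E v t) + ereal (l t))"
  have s: "s \<in> S" "gdist W E v s = enat c" using iv by (auto simp: isvc_def)
  have le1: "ereal_of_enat (gdist W E v s') + ereal (l s') \<le> ereal (real c) + ereal (l s)"
    using a s by auto
  then obtain b where b: "gdist W E v s' = enat b"
    by (cases "gdist W E v s'") auto
  have le1': "real b + l s' \<le> real c + l s" using le1 b by simp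
  have le2: "real c + l s \<le> real b + l s'" using iv a b by (auto simp: isvc_def)
  have bds: "0 \<le> l s" "l s \<le> 1/2" "0 \<le> l s'" "l s' \<le> 1/2" using bd s a by auto
  have "b = c"
  proof (rule ccontr)
    assume "b \<noteq> c"
    then have "b + 1 \<le> c \<or> c + 1 \<le> b" by linarith
    then have "real b + 1 \<le> real c \<or> real c + 1 \<le> real b" by linarith
    then show False using le1' le2 bds by linarith
  qed
  then have "l s' = l s" using le1' le2 by simp
  then show "s' = s" using inj a s by (auto dest: inj_onD)
qed

lemma VC_exists:
  assumes inj: "inj_on l S" and bd: "\<forall>s\<in>S. 0 \<le> l s \<and> l s \<le> 1/2"
    and ex: "\<exists>s\<in>S. gdist W E v s \<le> enat n"
    and fin: "\<And>m. finite {u. gdist W E v u \<le> enat m}"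
  shows "\<exists>c. isvc W E S l v (vcenter W E S l v) c"
proof -
  have ex': "\<exists>m. \<exists>s\<in>S. gdist W E v s = enat m" using ex by (metis enat_ile)
  define m where "m = (LEAST m. \<exists>s\<in>S. gdist W E v s = enat m)"
  have m: "\<exists>s\<in>S. gdist W E v s = enat m" unfolding m_def using ex' by (rule LeastI_ex)
  have mmin: "\<And>s b. s \<in> S \<Longrightarrow> gdist W E v s = enat b \<Longrightarrow> m \<le> b"
    unfolding m_def by (metis (mono_tags, lifting) Least_le)
  define C where "C = {s\<in>S. gdist W E v s = enat m}"
  have Cfin: "finite C" using fin[of m] by (rule finite_subset[rotated]) (auto simp: C_def)
  have Cne: "C \<noteq> {}" using m by (auto simp: C_def)
  obtain s0 where s0: "s0 \<in> C" "\<forall>t\<in>C. l s0 \<le> l t"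
  proof -
    have f: "finite (l ` C)" "l ` C \<noteq> {}" using Cfin Cne by auto
    obtain s0 where "s0 \<in> C" "l s0 = Min (l ` C)" using Min_in[OF f] by auto
    moreover have "\<forall>t\<in>C. Min (l ` C) \<le> l t" using f by simp
    ultimately show ?thesis using that by metis
  qed
  have iv: "isvc W E S l v s0 m" unfolding isvc_def
  proof (intro conjI ballI)
    show "s0 \<in> S" "gdist W E v s0 = enat m" using s0 by (auto simp: C_def)
  next
    fix t assume t: "t \<in> S"
    show "gdist W E v t = \<infinity> \<or> (\<exists>b. gdist W E v t = enat b \<and> real m + l s0 \<le> real b + l t)"
    proof (cases "gdist W E v t")
      case (enat b)
      have "m \<le> b" using mmin t enat by blast
      moreover have "l s0 \<le> 1/2" "0 \<le> l t" using bd t s0 by (auto simp: C_def)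
      moreover have "b = m \<Longrightarrow> l s0 \<le> l t" using s0 t enat by (auto simp: C_def)
      ultimately have "real m + l s0 \<le> real b + l t"
      proof (cases "b = m")
        case False
        then have "real m + 1 \<le> real b" using \<open>m \<le> b\<close> by linarith
        then show ?thesis using \<open>l s0 \<le> 1/2\<close> \<open>0 \<le> l t\<close> by linarith
      qed simp
      then show ?thesis using enat by blast
    qed simp
  qed
  then show ?thesis using VC_eq[OF inj bd iv] by auto
qed

lemma VC_bound: assumes "isvc W E S l v s c" "t \<in> S" "gdist W E v t \<le> enat n"
  "\<forall>s\<in>S. 0 \<le> l s \<and> l s \<le> 1/2"
  shows "c \<le> n"
proof -
  obtain b where b: "gdist W E v t = enat b" "b \<le> n" using assms(3) by (cases "gdist W E v t") auto
  then have "real c + l s \<le> real b + l t" using assms(1,2) by (auto simp: isvc_def)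
  moreover have "0 \<le> l s" "l t \<le> 1/2" using assms(1,2,4) by (auto simp: isvc_def)
  ultimately have "real c \<le> real b + 1/2" by linarith
  then show ?thesis using b by linarith
qed

lemma VC_cell:
  assumes inj: "inj_on l S" and bd: "\<forall>s\<in>S. 0 \<le> l s \<and> l s \<le> 1/2"
    and iv: "isvc W E S l v s a"
  shows "reach {w\<in>W. vcenter W E S l w = s} E v s"
proof -
  obtain xs where xs: "walk W E xs" "hd xs = v" "last xs = s" "length xs = Suc a"
    using gdist_enat[of W E v s a] iv unfolding isvc_def by blast
  have "set xs \<subseteq> {w\<in>W. vcenter W E S l w = s}"
  proof
    fix w assume "w \<in> set xs"
    then obtain i where i: "i < length xs" "w = xs ! i" by (auto simp: in_set_conv_nth)
    have wW: "w \<in> W" using xs(1) i \<open>w \<in> set xs\<close> by (auto simp: walk_def)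
    have "gdist W E v w \<le> enat (length (take (Suc i) xs) - 1)"
      using walk_take[OF xs(1)] xs i by (intro gdist_le) (auto simp: hd_take last_take_nth)
    then have dvw: "gdist W E v w \<le> enat i" using i by simp
    have "gdist W E w s \<le> enat (length (drop i xs) - 1)"
      using walk_drop[OF xs(1) i(1)] xs i by (intro gdist_le) (auto simp: hd_drop_conv_nth)
    then have dws: "gdist W E w s \<le> enat (a - i)" using xs i by simp
    then obtain c where c: "gdist W E w s = enat c" "c \<le> a - i"
      by (cases "gdist W E w s") auto
    have "isvc W E S l w s c" unfolding isvc_def
    proof (intro conjI ballI)
      show "s \<in> S" using iv by (simp add: isvc_def)
      show "gdist W E w s = enat c" by (rule c)
    next
      fix t assume t: "t \<in> S"
      show "gdist W E w t = \<infinity> \<or> (\<exists>b. gdist W E w t = enat b \<and> real c + l s \<le> real b + l t)"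
      proof (cases "gdist W E w t")
        case (enat b')
        have "gdist W E v t \<le> gdist W E v w + gdist W E w t" by (rule gdist_trans)
        also have "\<dots> \<le> enat i + enat b'" using dvw enat by (intro add_mono) auto
        finally obtain b where b: "gdist W E v t = enat b" "b \<le> i + b'"
          by (cases "gdist W E v t") auto
        have "gdist W E v t = \<infinity> \<or> (\<exists>b. gdist W E v t = enat b \<and> real a + l s \<le> real b + l t)"
          using iv t unfolding isvc_def by blast
        then have "real a + l s \<le> real b + l t" using b(1) by auto
        moreover have "c + i \<le> a" using c i xs by linarith
        then have "real c \<le> real a - real i" by linarith
        ultimately have "real c + l s \<le> real b' + l t" using b by linarith
        then show ?thesis using enat by blast
      qed simp
    qed
    then have "vcenter W E S l w = s" by (rule VC_eq[OF inj bd])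
    then show "w \<in> {w\<in>W. vcenter W E S l w = s}" using wW by simp
  qed
  then have "walk {w\<in>W. vcenter W E S l w = s} E xs" using xs(1) unfolding walk_def by blast
  then show ?thesis unfolding reach_def using xs(2,3) by blast
qed

theorem claim5p4:
  fixes V :: "'a set" and E :: "'a \<Rightarrow> 'a \<Rightarrow> bool"
    and h R :: nat and S1 S2 :: "'a set" and l1 l2 :: "'a \<Rightarrow> real"
  assumes G: "simple_graph V E" and lf: "locally_finite V E"
    and h: "even h" "h > 0" and R: "R > 0"
    and S1: "S1 \<subseteq> V"
    and S1_sep: "\<forall>s\<in>S1. \<forall>t\<in>S1. s \<noteq> t \<longrightarrow> gdist V E s t > enat h"
    and S1_cov: "\<forall>v\<in>V. \<exists>s\<in>S1. gdist V E v s \<le> enat h"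
    and l1: "inj_on l1 S1" "\<forall>s\<in>S1. 0 \<le> l1 s \<and> l1 s \<le> 1/2"
    and S2: "S2 \<subseteq> S1"
    and S2_sep: "\<forall>s\<in>S2. \<forall>t\<in>S2. s \<noteq> t \<longrightarrow>
        gdist S1 (cell_graph V E (vcenter V E S1 l1) S1) s t > enat R"
    and S2_cov: "\<forall>s\<in>S1. \<exists>t\<in>S2.
        gdist S1 (cell_graph V E (vcenter V E S1 l1) S1) s t \<le> enat R"
    and l2: "inj_on l2 S2" "\<forall>s\<in>S2. 0 \<le> l2 s \<and> l2 s \<le> 1/2"
  shows "\<forall>s\<in>S2.
     induced_connected E
       {v\<in>V. vcenter S1 (cell_graph V E (vcenter V E S1 l1) S1) S2 l2 (vcenter V E S1 l1 v) = s}
   \<and> (\<forall>v\<in>V. \<forall>k::nat. gdist V E v s = enat k \<and> int k \<le> int (R div 2) - int h \<longrightarrow>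
        vcenter S1 (cell_graph V E (vcenter V E S1 l1) S1) S2 l2 (vcenter V E S1 l1 v) = s)"
proof -
  define V1 where "V1 = vcenter V E S1 l1"
  define \<Gamma> where "\<Gamma> = cell_graph V E V1 S1"
  define V2 where "V2 = vcenter S1 \<Gamma> S2 l2"
  have S2sep: "\<forall>s\<in>S2. \<forall>t\<in>S2. s \<noteq> t \<longrightarrow> gdist S1 \<Gamma> s t > enat R"
    using S2_sep unfolding \<Gamma>_def V1_def .
  have S2cov: "\<forall>s\<in>S1. \<exists>t\<in>S2. gdist S1 \<Gamma> s t \<le> enat R"
    using S2_cov unfolding \<Gamma>_def V1_def .
  have symE: "\<And>x y. E x y \<Longrightarrow> E y x" using G unfolding simple_graph_def by blast
  have EV: "\<And>x y. E x y \<Longrightarrow> x \<in> V \<and> y \<in> V" using G unfolding simple_graph_def by blast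
  have lfE: "\<forall>w\<in>V. finite {u. E w u}" using lf unfolding locally_finite_def by blast
  have ballG: "\<And>v n. finite {u. gdist V E v u \<le> enat n}" using ball_finite[OF lfE] .
  have isv1: "\<And>v. v \<in> V \<Longrightarrow> \<exists>c. isvc V E S1 l1 v (V1 v) c \<and> c \<le> h"
  proof -
    fix v assume v: "v \<in> V"
    obtain t where t: "t \<in> S1" "gdist V E v t \<le> enat h" using S1_cov v by blast
    obtain c where c: "isvc V E S1 l1 v (V1 v) c" unfolding V1_def
      using VC_exists[OF l1(1) l1(2), of V E v h] t ballG by blast
    have "c \<le> h" using VC_bound[OF c t l1(2)] .
    then show "\<exists>c. isvc V E S1 l1 v (V1 v) c \<and> c \<le> h" using c by blast
  qed
  have V1S1: "\<And>v. v \<in> V \<Longrightarrow> V1 v \<in> S1" using isv1 unfolding isvc_def by blast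
  have V1fix: "\<And>s. s \<in> S1 \<Longrightarrow> V1 s = s"
  proof -
    fix s assume s: "s \<in> S1"
    have "isvc V E S1 l1 s s 0" unfolding isvc_def
    proof (intro conjI ballI)
      show "s \<in> S1" by (rule s)
      show "gdist V E s s = enat 0" using gdist_refl[of s V E] s S1 by (auto simp: zero_enat_def)
    next
      fix t assume t: "t \<in> S1"
      show "gdist V E s t = \<infinity> \<or> (\<exists>b. gdist V E s t = enat b \<and> real 0 + l1 s \<le> real b + l1 t)"
      proof (cases "t = s")
        case True then show ?thesis using gdist_refl[of s V E] s S1 by (auto simp: zero_enat_def)
      next
        case False
        then have gt: "gdist V E s t > enat h" using S1_sep s t by metis
        show ?thesis
        proof (cases "gdist V E s t")
          case (enat b)
          then have "b \<ge> 1" using gt h by simp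
          then have "real b \<ge> 1" by simp
          moreover have "l1 s \<le> 1/2" "0 \<le> l1 t" using l1(2) s t by auto
          ultimately have "real 0 + l1 s \<le> real b + l1 t" by linarith
          then show ?thesis using enat by auto
        qed simp
      qed
    qed
    then show "V1 s = s" unfolding V1_def by (rule VC_eq[OF l1(1) l1(2)])
  qed
  have \<Gamma>sym: "\<And>x y. \<Gamma> x y \<Longrightarrow> \<Gamma> y x" unfolding \<Gamma>_def cell_graph_def using symE by blast
  have dsym: "\<And>u v. gdist V E u v = gdist V E v u" using gdist_sym symE by metis
  have dsymG: "\<And>u v. gdist S1 \<Gamma> u v = gdist S1 \<Gamma> v u" using gdist_sym \<Gamma>sym by metis
  have cellball: "\<And>u. u \<in> V \<Longrightarrow> gdist V E (V1 u) u \<le> enat h"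
  proof -
    fix u assume u: "u \<in> V"
    obtain c where c: "isvc V E S1 l1 u (V1 u) c" "c \<le> h" using isv1[OF u] by blast
    then have "gdist V E u (V1 u) = enat c" unfolding isvc_def by blast
    then show "gdist V E (V1 u) u \<le> enat h" using c dsym by simp
  qed
  have \<Gamma>lf: "\<forall>s\<in>S1. finite {u. \<Gamma> s u}"
  proof
    fix s assume s: "s \<in> S1"
    let ?B = "{u. gdist V E s u \<le> enat h} \<inter> V"
    have "{u. \<Gamma> s u} \<subseteq> V1 ` (\<Union>a\<in>?B. {b. E a b})"
    proof
      fix u assume "u \<in> {u. \<Gamma> s u}"
      then obtain a b where ab: "a \<in> V" "b \<in> V" "E a b" "V1 a = s" "V1 b = u"
        unfolding \<Gamma>_def cell_graph_def by blast
      then have "a \<in> ?B" using cellball by blast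
      then show "u \<in> V1 ` (\<Union>a\<in>?B. {b. E a b})" using ab by blast
    qed
    moreover have "finite (V1 ` (\<Union>a\<in>?B. {b. E a b}))" using ballG lfE by auto
    ultimately show "finite {u. \<Gamma> s u}" by (rule finite_subset)
  qed
  have ball\<Gamma>: "\<And>x n. finite {u. gdist S1 \<Gamma> x u \<le> enat n}" using ball_finite[OF \<Gamma>lf] .
  have isv2: "\<And>x. x \<in> S1 \<Longrightarrow> \<exists>c. isvc S1 \<Gamma> S2 l2 x (V2 x) c"
  proof -
    fix x assume x: "x \<in> S1"
    obtain t where t: "t \<in> S2" "gdist S1 \<Gamma> x t \<le> enat R" using S2cov x by blast
    show "\<exists>c. isvc S1 \<Gamma> S2 l2 x (V2 x) c" unfolding V2_def
      using VC_exists[OF l2(1) l2(2), of S1 \<Gamma> x R] t ball\<Gamma> by blast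
  qed
  have V2fix: "\<And>s. s \<in> S2 \<Longrightarrow> V2 s = s"
  proof -
    fix s assume s: "s \<in> S2"
    have sS1: "s \<in> S1" using s S2 by blast
    have "isvc S1 \<Gamma> S2 l2 s s 0" unfolding isvc_def
    proof (intro conjI ballI)
      show "s \<in> S2" by (rule s)
      show "gdist S1 \<Gamma> s s = enat 0" using gdist_refl[of s S1 \<Gamma>] sS1 by (auto simp: zero_enat_def)
    next
      fix t assume t: "t \<in> S2"
      show "gdist S1 \<Gamma> s t = \<infinity> \<or> (\<exists>b. gdist S1 \<Gamma> s t = enat b \<and> real 0 + l2 s \<le> real b + l2 t)"
      proof (cases "t = s")
        case True then show ?thesis using gdist_refl[of s S1 \<Gamma>] sS1 by (auto simp: zero_enat_def)
      next
        case False
        then have gt: "gdist S1 \<Gamma> s t > enat R" using S2sep s t by metis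
        show ?thesis
        proof (cases "gdist S1 \<Gamma> s t")
          case (enat b)
          then have "b \<ge> 1" using gt R by simp
          then have "real b \<ge> 1" by simp
          moreover have "l2 s \<le> 1/2" "0 \<le> l2 t" using l2(2) s t by auto
          ultimately have "real 0 + l2 s \<le> real b + l2 t" by linarith
          then show ?thesis using enat by auto
        qed simp
      qed
    qed
    then show "V2 s = s" unfolding V2_def by (rule VC_eq[OF l2(1) l2(2)])
  qed
  have walk\<Gamma>: "\<And>xs. walk V E xs \<Longrightarrow> gdist S1 \<Gamma> (V1 (hd xs)) (V1 (last xs)) \<le> enat (length xs - 1)"
  proof -
    fix xs show "walk V E xs \<Longrightarrow> gdist S1 \<Gamma> (V1 (hd xs)) (V1 (last xs)) \<le> enat (length xs - 1)"
    proof (induction xs)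
      case Nil then show ?case by (simp add: walk_def)
    next
      case (Cons x xs)
      show ?case
      proof (cases "xs = []")
        case True
        then have "x \<in> V" using Cons.prems by simp
        then show ?thesis using True gdist_refl[of "V1 x" S1 \<Gamma>] V1S1 by (simp add: zero_enat_def)
      next
        case False
        then have w: "walk V E xs" "E x (hd xs)" "x \<in> V" using Cons.prems by (auto simp: walk_Cons)
        have IH: "gdist S1 \<Gamma> (V1 (hd xs)) (V1 (last xs)) \<le> enat (length xs - 1)" using Cons.IH w by blast
        have hxV: "hd xs \<in> V" using EV w by blast
        have step: "gdist S1 \<Gamma> (V1 x) (V1 (hd xs)) \<le> 1"
        proof (cases "V1 x = V1 (hd xs)")
          case True
          have "gdist S1 \<Gamma> (V1 x) (V1 x) = 0" using gdist_refl[of "V1 x" S1 \<Gamma>] V1S1[OF w(3)] by simp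
          then show ?thesis using True by simp
        next
          case False
          then have "\<Gamma> (V1 x) (V1 (hd xs))" unfolding \<Gamma>_def cell_graph_def
            using V1S1[OF w(3)] V1S1[OF hxV] w(2,3) hxV by blast
          then show ?thesis by (rule gdist_edge[OF V1S1[OF w(3)] V1S1[OF hxV]])
        qed
        have "gdist S1 \<Gamma> (V1 x) (V1 (last xs)) \<le> gdist S1 \<Gamma> (V1 x) (V1 (hd xs)) + gdist S1 \<Gamma> (V1 (hd xs)) (V1 (last xs))"
          by (rule gdist_trans)
        also have "\<dots> \<le> 1 + enat (length xs - 1)" using step IH by (rule add_mono)
        also have "\<dots> = enat (length (x#xs) - 1)" using False by (cases xs) (auto simp: one_enat_def)
        finally show ?thesis using False by simp
      qed
    qed
  qed
  have part2: "\<And>s v k. s \<in> S2 \<Longrightarrow> v \<in> V \<Longrightarrow> gdist V E v s = enat k \<Longrightarrow>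
      int k \<le> int (R div 2) - int h \<Longrightarrow> V2 (V1 v) = s"
  proof -
    fix s v k assume s: "s \<in> S2" and v: "v \<in> V" and d: "gdist V E v s = enat k"
      and kk: "int k \<le> int (R div 2) - int h"
    have sS1: "s \<in> S1" using S2 s by blast
    have "2 * (R div 2) \<le> R" by simp
    then have k2: "2 * k + 2 \<le> R" using kk h(2) by linarith
    obtain xs where xs: "walk V E xs" "hd xs = v" "last xs = s" "length xs = Suc k"
      using gdist_enat[OF d] by blast
    have "gdist S1 \<Gamma> (V1 v) s \<le> enat k" using walk\<Gamma>[OF xs(1)] xs V1fix[OF sS1] by simp
    then obtain c where c: "gdist S1 \<Gamma> (V1 v) s = enat c" "c \<le> k"
      by (cases "gdist S1 \<Gamma> (V1 v) s") auto
    have iv: "isvc S1 \<Gamma> S2 l2 (V1 v) s c" unfolding isvc_def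
    proof (intro conjI ballI)
      show "s \<in> S2" by (rule s)
      show "gdist S1 \<Gamma> (V1 v) s = enat c" by (rule c(1))
    next
      fix t assume t: "t \<in> S2"
      show "gdist S1 \<Gamma> (V1 v) t = \<infinity> \<or> (\<exists>b. gdist S1 \<Gamma> (V1 v) t = enat b \<and> real c + l2 s \<le> real b + l2 t)"
      proof (cases "gdist S1 \<Gamma> (V1 v) t")
        case (enat b)
        have "real c + l2 s \<le> real b + l2 t"
        proof (cases "t = s")
          case True then show ?thesis using c enat by simp
        next
          case False
          have gt: "gdist S1 \<Gamma> s t > enat R" using S2sep s t False by metis
          have "gdist S1 \<Gamma> s t \<le> gdist S1 \<Gamma> s (V1 v) + gdist S1 \<Gamma> (V1 v) t" by (rule gdist_trans)
          also have "\<dots> = enat c + enat b" using c enat dsymG by metis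
          finally have "enat R < enat c + enat b" using gt by (metis less_le_trans)
          then have "R < c + b" by simp
          then have "k + 1 \<le> b" using k2 c by linarith
          then have "real k + 1 \<le> real b" by linarith
          moreover have "real c \<le> real k" using c by simp
          moreover have "l2 s \<le> 1/2" "0 \<le> l2 t" using l2(2) s t by auto
          ultimately show ?thesis by linarith
        qed
        then show ?thesis using enat by blast
      qed simp
    qed
    show "V2 (V1 v) = s" unfolding V2_def by (rule VC_eq[OF l2(1) l2(2) iv])
  qed
  have rsym: "\<And>U x y. reach U E x y \<Longrightarrow> reach U E y x"
  proof -
    fix U x y assume a: "reach U E x y"
    show "reach U E y x"
      apply (rule reach_sym[where E=E])
       apply (erule symE)
      apply (rule a)
      done
  qed
  have cell1: "\<And>u. u \<in> V \<Longrightarrow> reach {w\<in>V. V1 w = V1 u} E u (V1 u)"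
  proof -
    fix u assume u: "u \<in> V"
    obtain c where c: "isvc V E S1 l1 u (V1 u) c" using isv1[OF u] by blast
    show "reach {w\<in>V. V1 w = V1 u} E u (V1 u)" using VC_cell[OF l1(1) l1(2) c] by (simp add: V1_def)
  qed
  have cell2: "\<And>x. x \<in> S1 \<Longrightarrow> reach {y\<in>S1. V2 y = V2 x} \<Gamma> x (V2 x)"
  proof -
    fix x assume x: "x \<in> S1"
    obtain c where c: "isvc S1 \<Gamma> S2 l2 x (V2 x) c" using isv2[OF x] by blast
    show "reach {y\<in>S1. V2 y = V2 x} \<Gamma> x (V2 x)" using VC_cell[OF l2(1) l2(2) c] by (simp add: V2_def)
  qed
  have part1: "\<And>s. s \<in> S2 \<Longrightarrow> induced_connected E {v\<in>V. V2 (V1 v) = s}"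
  proof -
    fix s assume s: "s \<in> S2"
    define U where "U = {v\<in>V. V2 (V1 v) = s}"
    have sS1: "s \<in> S1" using S2 s by blast
    have sU: "s \<in> U" unfolding U_def using sS1 S1 V1fix V2fix s by auto
    have toU: "\<And>y. V2 y = s \<Longrightarrow> {w\<in>V. V1 w = y} \<subseteq> U" by (auto simp: U_def)
    have conv: "\<And>ys. walk {y\<in>S1. V2 y = s} \<Gamma> ys \<Longrightarrow> reach U E (hd ys) (last ys)"
    proof -
      fix ys show "walk {y\<in>S1. V2 y = s} \<Gamma> ys \<Longrightarrow> reach U E (hd ys) (last ys)"
      proof (induction ys)
        case Nil then show ?case by (simp add: walk_def)
      next
        case (Cons y ys)
        have y: "y \<in> S1" "V2 y = s" using Cons.prems by (auto simp: walk_Cons)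
        show ?case
        proof (cases "ys = []")
          case True
          have "y \<in> U" unfolding U_def using y S1 V1fix by auto
          then show ?thesis using True reach_refl by simp
        next
          case False
          then have w: "walk {y\<in>S1. V2 y = s} \<Gamma> ys" "\<Gamma> y (hd ys)" using Cons.prems by (auto simp: walk_Cons)
          have IH: "reach U E (hd ys) (last ys)" using Cons.IH w by blast
          have "hd ys \<in> set ys" using False by simp
          then have hy: "V2 (hd ys) = s" using w(1) unfolding walk_def by blast
          obtain a b where ab: "a \<in> V" "b \<in> V" "E a b" "V1 a = y" "V1 b = hd ys"
            using w(2) unfolding \<Gamma>_def cell_graph_def by blast
          have "reach {w\<in>V. V1 w = y} E a y" using cell1[OF ab(1)] ab(4) by simp
          then have "reach U E a y" by (rule reach_mono[OF _ toU[OF y(2)]])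
          then have r1: "reach U E y a" by (rule rsym)
          have aU: "a \<in> U" "b \<in> U" unfolding U_def using ab y hy by auto
          have r2: "reach U E a b" using reach_edge[where E=E, OF aU ab(3)] .
          have "reach {w\<in>V. V1 w = hd ys} E b (hd ys)" using cell1[OF ab(2)] ab(5) by simp
          then have r3: "reach U E b (hd ys)" by (rule reach_mono[OF _ toU[OF hy]])
          have "reach U E y (last ys)" using reach_trans[OF reach_trans[OF reach_trans[OF r1 r2] r3] IH] .
          then show ?thesis using False by simp
        qed
      qed
    qed
    have toS: "\<And>u. u \<in> U \<Longrightarrow> reach U E u s"
    proof -
      fix u assume u: "u \<in> U"
      then have uV: "u \<in> V" and us: "V2 (V1 u) = s" unfolding U_def by auto
      have ra: "reach U E u (V1 u)" using reach_mono[OF cell1[OF uV] toU[OF us]] .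
      have "reach {y\<in>S1. V2 y = s} \<Gamma> (V1 u) s" using cell2[OF V1S1[OF uV]] us by simp
      then obtain zs where "walk {y\<in>S1. V2 y = s} \<Gamma> zs" "hd zs = V1 u" "last zs = s"
        unfolding reach_def by blast
      then have "reach U E (V1 u) s" using conv by metis
      then show "reach U E u s" by (rule reach_trans[OF ra])
    qed
    have "induced_connected E U" unfolding induced_connected_def
    proof (intro conjI ballI)
      show "U \<noteq> {}" using sU by blast
    next
      fix u v assume "u \<in> U" "v \<in> U"
      then have "reach U E u v" using reach_trans[OF toS[of u] rsym[OF toS[of v]]] by blast
      then show "\<exists>xs. walk U E xs \<and> hd xs = u \<and> last xs = v" unfolding reach_def .
    qed
    then show "induced_connected E {v\<in>V. V2 (V1 v) = s}" unfolding U_def .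
  qed
  have main: "\<forall>s\<in>S2. induced_connected E {v\<in>V. V2 (V1 v) = s} \<and>
     (\<forall>v\<in>V. \<forall>k::nat. gdist V E v s = enat k \<and> int k \<le> int (R div 2) - int h \<longrightarrow> V2 (V1 v) = s)"
    using part1 part2 by blast
  then show ?thesis unfolding V2_def \<Gamma>_def V1_def .
qed

end
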